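(* Let $k\ge 1$, $d\in\mathbb{N}$ and $\alpha=(\alpha_1,\dots,\alpha_k)\in\mathbb{N}^k$ with $\alpha_1+\dots+\alpha_k=2d$. Then for every finite simple undirected graph, $$w_{\alpha_1}\cdots w_{\alpha_k}\le w_0^{k-1}\,w_{2d}.$$
   Context: $\mathbb{N}$ denotes the nonnegative integers. For $j\in\mathbb{N}$, $w_j$ denotes the total number of walks of length $j$ in the graph (a walk is a sequence of vertices in which consecutive vertices are adjacent; vertices and edges may repeat; the length is the number of edges); in particular $w_0$ is the number of vertices. *)

theory Defs
  imports Main
begin

definition simple_graph :: "'v set \<Rightarrow> ('v \<Rightarrow> 'v \<Rightarrow> bool) \<Rightarrow> bool" where
  "simple_graph V E \<longleftrightarrow> finite V \<and> (\<forall>x y. E x y \<longrightarrow> x \<in> V \<and> y \<in> V)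
     \<and> (\<forall>x y. E x y \<longrightarrow> E y x) \<and> (\<forall>x. \<not> E x x)"

definition walks :: "'v set \<Rightarrow> ('v \<Rightarrow> 'v \<Rightarrow> bool) \<Rightarrow> nat \<Rightarrow> 'v list set" where
  "walks V E j = {p. length p = Suc j \<and> set p \<subseteq> V \<and> (\<forall>i < j. E (p ! i) (p ! Suc i))}"

definition num_walks :: "'v set \<Rightarrow> ('v \<Rightarrow> 'v \<Rightarrow> bool) \<Rightarrow> nat \<Rightarrow> nat" where
  "num_walks V E j = card (walks V E j)"

end

theory Submission imports Defs "HOL-Analysis.Convex" begin

fun W :: "'v set \<Rightarrow> ('v \<Rightarrow> 'v \<Rightarrow> bool) \<Rightarrow> nat \<Rightarrow> 'v \<Rightarrow> 'v \<Rightarrow> nat" where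
  "W V E 0 u v = (if u = v then 1 else 0)"
| "W V E (Suc j) u v = (\<Sum>x\<in>V. if E x v then W V E j u x else 0)"

lemma finite_walks:
  assumes "finite V" shows "finite (walks V E j)"
proof -
  have "walks V E j \<subseteq> {p. set p \<subseteq> V \<and> length p = Suc j}" unfolding walks_def by auto
  then show ?thesis using finite_lists_length_eq[OF assms] by (rule finite_subset)
qed

lemma card_fibers:
  assumes "finite A" "finite T" "g ` A \<subseteq> T"
  shows "card A = (\<Sum>y\<in>T. card {x\<in>A. g x = y})"
  using sum.group[OF assms, of "\<lambda>_. 1::nat"] unfolding card_eq_sum by simp

lemma walks_last: "q \<in> walks V E j \<Longrightarrow> last q \<in> V"
  unfolding walks_def by (cases q rule: rev_cases) auto

lemma walks_hd: "q \<in> walks V E j \<Longrightarrow> hd q \<in> V"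
  unfolding walks_def by (cases q) auto

lemma walks_Suc:
  assumes "v \<in> V"
  shows "{p\<in>walks V E (Suc j). hd p = u \<and> last p = v}
     = (\<lambda>q. q @ [v]) ` {q\<in>walks V E j. hd q = u \<and> E (last q) v}"
proof (intro equalityI subsetI)
  fix p assume p: "p \<in> {p\<in>walks V E (Suc j). hd p = u \<and> last p = v}"
  then have len: "length p = Suc (Suc j)" by (simp add: walks_def)
  define q where "q = butlast p"
  have pq: "p = q @ [v]" using p len unfolding q_def
    by (metis (mono_tags, lifting) append_butlast_last_id list.size(3) mem_Collect_eq nat.simps(3))
  have lq: "length q = Suc j" using len pq by simp
  have "q \<in> walks V E j"
  proof -
    have "\<forall>i < j. E (q ! i) (q ! Suc i)"
    proof (intro allI impI)
      fix i assume i: "i < j"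
      have "E (p ! i) (p ! Suc i)" using p i by (simp add: walks_def)
      then show "E (q ! i) (q ! Suc i)" using i lq pq by (simp add: nth_append)
    qed
    then show ?thesis using p lq pq by (auto simp: walks_def)
  qed
  moreover have "hd q = u" using p pq lq by (cases q) auto
  moreover have "E (last q) v"
  proof -
    have "E (p ! j) (p ! Suc j)" using p by (simp add: walks_def)
    moreover have "p ! j = last q" using pq lq by (cases q rule: rev_cases) (auto simp: nth_append)
    moreover have "p ! Suc j = v" using pq lq by (simp add: nth_append)
    ultimately show ?thesis by simp
  qed
  ultimately show "p \<in> (\<lambda>q. q @ [v]) ` {q\<in>walks V E j. hd q = u \<and> E (last q) v}"
    using pq by blast
next
  fix p assume "p \<in> (\<lambda>q. q @ [v]) ` {q\<in>walks V E j. hd q = u \<and> E (last q) v}"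
  then obtain q where pq: "p = q @ [v]" and q: "q \<in> walks V E j" "hd q = u" "E (last q) v" by blast
  have lq: "length q = Suc j" using q by (simp add: walks_def)
  have "\<forall>i < Suc j. E (p ! i) (p ! Suc i)"
  proof (intro allI impI)
    fix i assume i: "i < Suc j"
    show "E (p ! i) (p ! Suc i)"
    proof (cases "i = j")
      case True
      then show ?thesis using pq lq q(3) by (cases q rule: rev_cases) (auto simp: nth_append)
    next
      case False
      then have "i < j" using i by simp
      then show ?thesis using pq lq q(1) by (simp add: nth_append walks_def)
    qed
  qed
  then show "p \<in> {p\<in>walks V E (Suc j). hd p = u \<and> last p = v}"
    using q lq assms pq by (auto simp: walks_def) (cases q; simp)
qed

lemma walks_count:
  assumes "simple_graph V E" "v \<in> V"
  shows "card {p\<in>walks V E j. hd p = u \<and> last p = v} = W V E j u v"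
  using assms(2)
proof (induction j arbitrary: v)
  case 0
  have "{p\<in>walks V E 0. hd p = u \<and> last p = v} = (if u = v then {[v]} else {})"
    using 0 by (auto simp: walks_def length_Suc_conv)
  then show ?case by simp
next
  case (Suc j)
  have fin: "finite V" using assms(1) by (simp add: simple_graph_def)
  have "card {p\<in>walks V E (Suc j). hd p = u \<and> last p = v}
      = card {q\<in>walks V E j. hd q = u \<and> E (last q) v}"
    unfolding walks_Suc[OF Suc.prems] by (rule card_image) (simp add: inj_on_def)
  also have "\<dots> = (\<Sum>x\<in>V. card {q\<in>{q\<in>walks V E j. hd q = u \<and> E (last q) v}. last q = x})"
    using fin finite_walks[OF fin, of E j]
    by (intro card_fibers) (auto simp: walks_last)
  also have "\<dots> = (\<Sum>x\<in>V. if E x v then W V E j u x else 0)"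
  proof (rule sum.cong)
    fix x assume x: "x \<in> V"
    show "card {q\<in>{q\<in>walks V E j. hd q = u \<and> E (last q) v}. last q = x} = (if E x v then W V E j u x else 0)"
    proof (cases "E x v")
      case True
      then have "{q\<in>{q\<in>walks V E j. hd q = u \<and> E (last q) v}. last q = x} = {p\<in>walks V E j. hd p = u \<and> last p = x}" by auto
      then show ?thesis using Suc.IH[OF x] True by simp
    next
      case False
      then have "{q\<in>{q\<in>walks V E j. hd q = u \<and> E (last q) v}. last q = x} = {}" by auto
      then show ?thesis using False by (metis card.empty)
    qed
  qed simp
  finally show ?case by simp
qed

lemma num_walks_W:
  assumes "simple_graph V E"
  shows "num_walks V E j = (\<Sum>u\<in>V. \<Sum>v\<in>V. W V E j u v)"
proof -
  have fin: "finite V" using assms(1) by (simp add: simple_graph_def)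
  have hl: "(\<lambda>p. (hd p, last p)) ` walks V E j \<subseteq> V \<times> V"
  proof
    fix z assume "z \<in> (\<lambda>p. (hd p, last p)) ` walks V E j"
    then obtain p where "p \<in> walks V E j" "z = (hd p, last p)" by blast
    then show "z \<in> V \<times> V" unfolding walks_def
      by (cases p) auto
  qed
  have "num_walks V E j = (\<Sum>z\<in>V\<times>V. card {p\<in>walks V E j. (hd p, last p) = z})"
    unfolding num_walks_def using fin finite_walks[OF fin, of E j] hl
    by (intro card_fibers) auto
  also have "\<dots> = (\<Sum>u\<in>V. \<Sum>v\<in>V. card {p\<in>walks V E j. (hd p, last p) = (u,v)})"
    unfolding sum.cartesian_product by (intro sum.cong refl) auto
  also have "\<dots> = (\<Sum>u\<in>V. \<Sum>v\<in>V. W V E j u v)"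
    using walks_count[OF assms] by (intro sum.cong refl) simp
  finally show ?thesis .
qed

lemma W_assoc:
  assumes "v \<in> V" and fin: "finite V"
  shows "W V E (a + b) u v = (\<Sum>x\<in>V. W V E a u x * W V E b x v)"
  using assms
proof (induction b arbitrary: v)
  case 0
  have "(\<Sum>x\<in>V. W V E a u x * W V E 0 x v) = (\<Sum>x\<in>V. if x = v then W V E a u x else 0)"
    by (intro sum.cong) auto
  also have "\<dots> = W V E a u v" using 0 by (simp add: sum.delta sum.delta')
  finally show ?case by simp
next
  case (Suc b)
  have "W V E (a + Suc b) u v = (\<Sum>y\<in>V. if E y v then W V E (a + b) u y else 0)" by simp
  also have "\<dots> = (\<Sum>y\<in>V. if E y v then (\<Sum>x\<in>V. W V E a u x * W V E b x y) else 0)"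
    using Suc.IH fin by (intro sum.cong) auto
  also have "\<dots> = (\<Sum>y\<in>V. \<Sum>x\<in>V. W V E a u x * (if E y v then W V E b x y else 0))"
    by (intro sum.cong) auto
  also have "\<dots> = (\<Sum>x\<in>V. \<Sum>y\<in>V. W V E a u x * (if E y v then W V E b x y else 0))"
    by (rule sum.swap)
  also have "\<dots> = (\<Sum>x\<in>V. W V E a u x * W V E (Suc b) x v)"
    by (simp add: sum_distrib_left)
  finally show ?case .
qed

lemma W_one:
  assumes "x \<in> V" "finite V" shows "W V E 1 x v = (if E x v then 1 else 0)"
proof -
  have "W V E 1 x v = (\<Sum>y\<in>V. if E y v then W V E 0 x y else 0)"
    by (simp add: One_nat_def)
  also have "\<dots> = (\<Sum>y\<in>V. if y = x then (if E x v then 1 else 0) else 0)"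
    by (intro sum.cong) auto
  also have "\<dots> = (if E x v then 1 else 0)" using assms by (simp add: sum.delta')
  finally show ?thesis .
qed

lemma W_sym:
  assumes "simple_graph V E" "u \<in> V" "v \<in> V"
  shows "W V E j u v = W V E j v u"
  using assms(2,3)
proof (induction j arbitrary: u v)
  case 0
  then show ?case by simp
next
  case (Suc j)
  have sym: "\<And>x y. E x y = E y x" using assms(1) unfolding simple_graph_def by blast
  have fin: "finite V" using assms(1) unfolding simple_graph_def by blast
  have "W V E (Suc j) u v = W V E (j + 1) u v" by simp
  also have "\<dots> = (\<Sum>x\<in>V. W V E j u x * W V E 1 x v)" by (rule W_assoc[OF Suc.prems(2) fin])
  also have "\<dots> = (\<Sum>x\<in>V. W V E 1 v x * W V E j x u)"
  proof (intro sum.cong refl)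
    fix x assume x: "x \<in> V"
    show "W V E j u x * W V E 1 x v = W V E 1 v x * W V E j x u"
      unfolding W_one[OF x fin] W_one[OF Suc.prems(2) fin] Suc.IH[OF Suc.prems(1) x]
      by (simp add: sym)
  qed
  also have "\<dots> = W V E (1 + j) v u" by (rule W_assoc[OF Suc.prems(1) fin, symmetric])
  finally show ?case by simp
qed

definition F :: "'v set \<Rightarrow> ('v \<Rightarrow> 'v \<Rightarrow> bool) \<Rightarrow> nat \<Rightarrow> 'v \<Rightarrow> nat" where
  "F V E a x = (\<Sum>u\<in>V. W V E a u x)"

lemma num_walks_add:
  assumes "simple_graph V E"
  shows "num_walks V E (a + b) = (\<Sum>x\<in>V. F V E a x * F V E b x)"
proof -
  have "num_walks V E (a + b) = (\<Sum>u\<in>V. \<Sum>v\<in>V. \<Sum>x\<in>V. W V E a u x * W V E b x v)"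
    unfolding num_walks_W[OF assms] using assms unfolding simple_graph_def by (intro sum.cong refl W_assoc) auto
  also have "\<dots> = (\<Sum>u\<in>V. \<Sum>x\<in>V. \<Sum>v\<in>V. W V E a u x * W V E b x v)"
    by (intro sum.cong refl sum.swap)
  also have "\<dots> = (\<Sum>x\<in>V. \<Sum>u\<in>V. \<Sum>v\<in>V. W V E a u x * W V E b x v)"
    by (rule sum.swap)
  also have "\<dots> = (\<Sum>x\<in>V. F V E a x * (\<Sum>v\<in>V. W V E b x v))"
    unfolding F_def by (simp add: sum_product)
  also have "\<dots> = (\<Sum>x\<in>V. F V E a x * F V E b x)"
    unfolding F_def using W_sym[OF assms] by (intro sum.cong refl) (metis (no_types, lifting) sum.cong)
  finally show ?thesis .
qed

lemma walks_CS:
  assumes "simple_graph V E"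
  shows "real (num_walks V E (a + b))^2 \<le> real (num_walks V E (2*a)) * real (num_walks V E (2*b))"
proof -
  have "real (num_walks V E (a + b)) = (\<Sum>x\<in>V. real (F V E a x) * real (F V E b x))"
    unfolding num_walks_add[OF assms] by simp
  moreover have "real (num_walks V E (2*a)) = (\<Sum>x\<in>V. (real (F V E a x))^2)"
    using num_walks_add[OF assms, of a a] by (simp add: mult_2 power2_eq_square)
  moreover have "real (num_walks V E (2*b)) = (\<Sum>x\<in>V. (real (F V E b x))^2)"
    using num_walks_add[OF assms, of b b] by (simp add: mult_2 power2_eq_square)
  ultimately show ?thesis using Cauchy_Schwarz_ineq_sum by metis
qed


lemma logconv:
  fixes e :: "nat \<Rightarrow> real"
  assumes pos: "\<And>i. e i > 0" and lc: "\<And>i. e (Suc i)^2 \<le> e i * e (Suc (Suc i))" and jd: "j \<le> d"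
  shows "e j ^ d \<le> e 0 ^ (d - j) * e d ^ j"
proof -
  define r where "r i = e (Suc i) / e i" for i
  have rpos: "r i > 0" for i using pos unfolding r_def by simp
  have rmono: "r i \<le> r (Suc i)" for i
    using lc[of i] pos[of i] pos[of "Suc i"] unfolding r_def
    by (simp add: divide_simps power2_eq_square mult.commute)
  have rle: "i \<le> i' \<Longrightarrow> r i \<le> r i'" for i i'
    using lift_Suc_mono_le[of r, OF rmono] by blast
  have ef: "e n = e 0 * prod r {..<n}" for n
  proof (induction n)
    case 0 then show ?case by simp
  next
    case (Suc n)
    have "e (Suc n) = e n * r n" using pos[of n] unfolding r_def by simp
    then show ?case using Suc by simp
  qed
  define P where "P = prod r {..<j}"
  define Q where "Q = prod r {j..<d}"
  have Ppos: "P > 0" unfolding P_def using rpos by (simp add: prod_pos)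
  have Qpos: "Q > 0" unfolding Q_def using rpos by (simp add: prod_pos)
  have PQ: "prod r {..<d} = P * Q" unfolding P_def Q_def
    using prod.atLeastLessThan_concat[of 0 j d r] jd by (simp add: atLeast0LessThan)
  have P_le: "P \<le> r j ^ j"
  proof -
    have "P \<le> prod (\<lambda>_. r j) {..<j}" unfolding P_def
      using rpos rle by (intro prod_mono) (auto simp: less_imp_le)
    then show ?thesis by simp
  qed
  have Q_ge: "r j ^ (d - j) \<le> Q"
  proof -
    have "prod (\<lambda>_. r j) {j..<d} \<le> Q" unfolding Q_def
      using rpos rle by (intro prod_mono) (auto simp: less_imp_le)
    then show ?thesis by simp
  qed
  have key: "P ^ (d - j) \<le> Q ^ j"
  proof -
    have "P ^ (d - j) \<le> (r j ^ j) ^ (d - j)" using P_le Ppos by (intro power_mono) auto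
    also have "\<dots> = (r j ^ (d - j)) ^ j" by (simp add: power_mult[symmetric] mult.commute)
    also have "\<dots> \<le> Q ^ j" using Q_ge rpos[of j] by (intro power_mono) auto
    finally show ?thesis .
  qed
  have d: "d = (d - j) + j" using jd by simp
  have "e j ^ d = e 0 ^ d * (P ^ (d - j) * P ^ j)"
    unfolding ef[of j] P_def[symmetric] power_mult_distrib
    using jd by (simp add: power_add[symmetric])
  also have "\<dots> \<le> e 0 ^ d * (Q ^ j * P ^ j)"
    using key pos[of 0] Ppos by (intro mult_left_mono mult_right_mono) auto
  also have "\<dots> = e 0 ^ (d - j) * e d ^ j"
    unfolding ef[of d] PQ power_mult_distrib
    by (subst (1) d, subst power_add) (simp add: ac_simps)
  finally show ?thesis .
qed

lemma walks_nonempty: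
  assumes "simple_graph V E" "E x y"
  shows "num_walks V E m > 0"
proof -
  have fin: "finite V" using assms(1) by (simp add: simple_graph_def)
  have xy: "x \<in> V" "y \<in> V" "E y x" using assms unfolding simple_graph_def by blast+
  define p where "p = map (\<lambda>i. if even i then x else y) [0..<Suc m]"
  have "p \<in> walks V E m"
    unfolding walks_def p_def using xy assms(2)
    by (auto simp del: upt_Suc simp: nth_append)
  then show ?thesis unfolding num_walks_def using finite_walks[OF fin]
    by (metis card_gt_0_iff empty_iff)
qed

lemma elem_bound:
  assumes G: "simple_graph V E" and xy: "E x y" and a: "a \<le> 2 * d"
  shows "num_walks V E a ^ (2*d) * num_walks V E 0 ^ a \<le> num_walks V E 0 ^ (2*d) * num_walks V E (2*d) ^ a"
proof -
  define e where "e i = real (num_walks V E (2*i))" for i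
  have pos: "e i > 0" for i unfolding e_def using walks_nonempty[OF G xy] by simp
  have lc: "e (Suc i)^2 \<le> e i * e (Suc (Suc i))" for i
    unfolding e_def using walks_CS[OF G, of i "Suc (Suc i)"] by (simp add: mult_2)
  have LC: "j \<le> d \<Longrightarrow> e j ^ d \<le> e 0 ^ (d - j) * e d ^ j" for j
    by (rule logconv[of e]) (use pos lc in auto)
  define w where "w = real (num_walks V E a)"
  have w0: "w \<ge> 0" unfolding w_def by simp
  have "w ^ (2*d) * e 0 ^ a \<le> e 0 ^ (2*d) * e d ^ a"
  proof (cases "even a")
    case True
    then obtain j where j: "a = 2*j" by blast
    then have jd: "j \<le> d" using a by simp
    have "w ^ (2*d) = (e j ^ d)^2" unfolding w_def e_def j by (simp add: power_mult[symmetric] mult.commute)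
    also have "\<dots> \<le> (e 0 ^ (d - j) * e d ^ j)^2"
      using LC[OF jd] pos by (intro power_mono) (auto simp: less_imp_le)
    finally have "w ^ (2*d) * e 0 ^ a \<le> (e 0 ^ (d - j) * e d ^ j)^2 * e 0 ^ (2*j)"
      using pos[of 0] unfolding j by (intro mult_right_mono) auto
    also have "\<dots> = e 0 ^ (2*(d - j) + 2*j) * e d ^ (2*j)"
      by (simp add: power_mult_distrib power_mult[symmetric] power_add ac_simps)
    also have "2*(d - j) + 2*j = 2*d" using jd by simp
    finally show ?thesis using j by simp
  next
    case False
    then obtain j where j: "a = 2*j + 1" using oddE by blast
    then have jd: "Suc j \<le> d" using a by simp
    have "w^2 \<le> e j * e (Suc j)"
      unfolding w_def e_def j using walks_CS[OF G, of j "Suc j"] by (simp add: mult_2)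
    then have "w ^ (2*d) \<le> (e j * e (Suc j)) ^ d"
      using w0 by (simp add: power_mult power_mono)
    also have "\<dots> = e j ^ d * e (Suc j) ^ d" by (simp add: power_mult_distrib)
    also have "\<dots> \<le> (e 0 ^ (d - j) * e d ^ j) * (e 0 ^ (d - Suc j) * e d ^ Suc j)"
      using LC[of j] LC[of "Suc j"] jd pos by (intro mult_mono) (auto simp: less_imp_le)
    finally have "w ^ (2*d) * e 0 ^ a \<le> (e 0 ^ (d - j) * e d ^ j) * (e 0 ^ (d - Suc j) * e d ^ Suc j) * e 0 ^ (2*j+1)"
      using pos[of 0] unfolding j by (intro mult_right_mono) auto
    also have "\<dots> = e 0 ^ ((d - j) + (d - Suc j) + (2*j+1)) * e d ^ (j + Suc j)"
      by (simp add: power_add ac_simps)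
    also have "(d - j) + (d - Suc j) + (2*j+1) = 2*d" using jd by simp
    also have "j + Suc j = a" using j by simp
    finally show ?thesis .
  qed
  then have "real (num_walks V E a ^ (2*d) * num_walks V E 0 ^ a) \<le> real (num_walks V E 0 ^ (2*d) * num_walks V E (2*d) ^ a)"
    unfolding w_def e_def by simp
  then show ?thesis by linarith
qed

lemma prod_list_bound:
  fixes f :: "nat \<Rightarrow> nat"
  assumes "\<And>a. a \<in> set \<alpha> \<Longrightarrow> f a ^ m * n ^ a \<le> n ^ m * c ^ a"
  shows "(\<Prod>a\<leftarrow>\<alpha>. f a) ^ m * n ^ sum_list \<alpha> \<le> n ^ (m * length \<alpha>) * c ^ sum_list \<alpha>"
  using assms
proof (induction \<alpha>)
  case Nil then show ?case by simp
next
  case (Cons a \<alpha>)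
  have "(\<Prod>b\<leftarrow>a#\<alpha>. f b) ^ m * n ^ sum_list (a#\<alpha>)
      = (f a ^ m * n ^ a) * ((\<Prod>b\<leftarrow>\<alpha>. f b) ^ m * n ^ sum_list \<alpha>)"
    by (simp add: power_mult_distrib power_add ac_simps)
  also have "\<dots> \<le> (n ^ m * c ^ a) * (n ^ (m * length \<alpha>) * c ^ sum_list \<alpha>)"
    by (rule mult_mono) (use Cons in auto)
  also have "\<dots> = n ^ (m * length (a#\<alpha>)) * c ^ sum_list (a#\<alpha>)"
    by (simp add: power_add ac_simps)
  finally show ?case .
qed

lemma prod_list_const:
  assumes "\<And>a. a \<in> set \<alpha> \<Longrightarrow> a = 0"
  shows "(\<Prod>a\<leftarrow>\<alpha>. (f::nat\<Rightarrow>nat) a) = f 0 ^ length \<alpha>"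
  using assms by (induction \<alpha>) auto

theorem theorem1:
  fixes V :: "'v set" and E :: "'v \<Rightarrow> 'v \<Rightarrow> bool"
    and \<alpha> :: "nat list" and d :: nat
  assumes "simple_graph V E"
    and "length \<alpha> \<ge> 1"
    and "sum_list \<alpha> = 2 * d"
  shows "(\<Prod>a\<leftarrow>\<alpha>. num_walks V E a)
           \<le> num_walks V E 0 ^ (length \<alpha> - 1) * num_walks V E (2 * d)"
proof (cases "d = 0")
  case True
  then have z: "\<And>a. a \<in> set \<alpha> \<Longrightarrow> a = 0" using assms(3) by simp
  have "num_walks V E 0 ^ length \<alpha> = num_walks V E 0 ^ (length \<alpha> - 1) * num_walks V E 0"
    using assms(2) by (metis One_nat_def Suc_pred less_eq_Suc_le mult.commute power_Suc)
  then show ?thesis using prod_list_const[OF z] True by simp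
next
  case False
  show ?thesis
  proof (cases "\<exists>x y. E x y")
    case False
    have zero: "num_walks V E j = 0" if "j > 0" for j
    proof -
      have "walks V E j = {}" using False that unfolding walks_def by auto
      then show ?thesis by (simp add: num_walks_def)
    qed
    obtain a where "a \<in> set \<alpha>" "a > 0" using \<open>d \<noteq> 0\<close> assms(3)
      by (metis mult_is_0 neq0_conv sum_list_eq_0_iff zero_neq_numeral)
    then have "(\<Prod>a\<leftarrow>\<alpha>. num_walks V E a) = 0"
      using zero by (simp add: prod_list_zero_iff) (metis image_eqI)
    then show ?thesis by simp
  next
    case True
    then obtain x y where xy: "E x y" by blast
    have xV: "x \<in> V" using assms(1) xy unfolding simple_graph_def by blast
    have fin: "finite V" using assms(1) by (simp add: simple_graph_def)
    define n where "n = num_walks V E 0"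
    have n0: "n = card V" unfolding n_def num_walks_W[OF assms(1)]
      using fin by (simp add: sum.delta)
    have npos: "n > 0" using n0 xV fin by (simp add: card_gt_0_iff) blast
    define c where "c = num_walks V E (2*d)"
    define k where "k = length \<alpha>"
    define X where "X = (\<Prod>a\<leftarrow>\<alpha>. num_walks V E a)"
    have "X ^ (2*d) * n ^ (2*d) \<le> n ^ (2*d * k) * c ^ (2*d)"
      unfolding X_def n_def c_def k_def assms(3)[symmetric]
    proof (rule prod_list_bound)
      fix a assume "a \<in> set \<alpha>"
      then have "a \<le> sum_list \<alpha>" by (simp add: member_le_sum_list)
      then show "num_walks V E a ^ sum_list \<alpha> * num_walks V E 0 ^ a \<le> num_walks V E 0 ^ sum_list \<alpha> * num_walks V E (sum_list \<alpha>) ^ a"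
        using elem_bound[OF assms(1) xy, of a d] assms(3) by simp
    qed
    also have "n ^ (2*d * k) = (n ^ (k - 1)) ^ (2*d) * n ^ (2*d)"
    proof -
      have "2*d*k = (k-1)*(2*d) + 2*d" using assms(2) unfolding k_def
        by (cases "length \<alpha>") (auto simp: algebra_simps)
      then show ?thesis by (simp add: power_add power_mult)
    qed
    finally have "X ^ (2*d) * n ^ (2*d) \<le> (n ^ (k - 1) * c) ^ (2*d) * n ^ (2*d)"
      by (simp add: power_mult_distrib ac_simps)
    then have "X ^ (2*d) \<le> (n ^ (k - 1) * c) ^ (2*d)" using npos by simp
    then have "X ^ Suc (2*d - 1) \<le> (n ^ (k - 1) * c) ^ Suc (2*d - 1)" using False by simp
    then have "X \<le> n ^ (k - 1) * c" by (rule power_le_imp_le_base) simp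
    then show ?thesis unfolding X_def n_def c_def k_def .
  qed
qed

end
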